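(* Let $X$ be a stacked simplicial complex of dimension $d$ with a fixed stacking order, and let $f_1,\dots,f_p$ with $p\ge 2$ be a path in $X$. Let $f_i$ be the facet of this path which comes last in the stacking order, and let $v$ be its free vertex. Then either $f_i=f_1$ and $\{v\}=f_1\setminus f_2$, or $f_i=f_p$ and $\{v\}=f_p\setminus f_{p-1}$.
   Context: A simplicial complex $X$ on a finite vertex set $V$ is a family of subsets (faces) of $V$ closed under taking subsets, every element of $V$ lying in some face; facets are inclusion-maximal faces. $X$ is pure of dimension $d$ if every facet has $d+1$ elements; a codimension one face is a face with $d$ elements. $X$ is stacked if it is pure of some dimension $d$ and its facets can be ordered $F_0,F_1,\dots,F_k$ (a stacking order) such that for each $p\ge 1$, $F_p$ contains exactly one vertex $v_p$ not in $F_0\cup\dots\cup F_{p-1}$ (called the free vertex of $F_p$), and $F_p\setminus\{v_p\}\subseteq F_j$ for some $j<p$. A walk is a sequence of facets $f_1,\dots,f_p$ ($p\ge 1$) such that each $f_i\cap f_{i+1}$ has exactly $d$ elements; a path is a walk in which the faces $f_i\cap f_{i+1}$, $1\le i<p$, are pairwise distinct; it is a path from $f_1$ to $f_p$. *)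

theory Defs
  imports Main
begin

definition simplicial_complex :: "'a set \<Rightarrow> 'a set set \<Rightarrow> bool" where
  "simplicial_complex V X \<longleftrightarrow> finite V \<and> (\<forall>F\<in>X. F \<subseteq> V) \<and>
     (\<forall>F\<in>X. \<forall>G. G \<subseteq> F \<longrightarrow> G \<in> X) \<and> (\<forall>v\<in>V. \<exists>F\<in>X. v \<in> F)"

definition facets :: "'a set set \<Rightarrow> 'a set set" where
  "facets X = {F \<in> X. \<forall>G\<in>X. F \<subseteq> G \<longrightarrow> G = F}"

definition pure :: "'a set set \<Rightarrow> nat \<Rightarrow> bool" where
  "pure X d \<longleftrightarrow> (\<forall>F\<in>facets X. card F = d + 1)"

definition new_vertices :: "'a set list \<Rightarrow> nat \<Rightarrow> 'a set" where
  "new_vertices Fs p = Fs ! p - \<Union>(set (take p Fs))"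

definition free_vertex :: "'a set list \<Rightarrow> nat \<Rightarrow> 'a" where
  "free_vertex Fs p = (THE v. v \<in> new_vertices Fs p)"

definition stacking_order :: "'a set set \<Rightarrow> 'a set list \<Rightarrow> bool" where
  "stacking_order X Fs \<longleftrightarrow> distinct Fs \<and> set Fs = facets X \<and>
     (\<forall>p. 1 \<le> p \<and> p < length Fs \<longrightarrow>
        card (new_vertices Fs p) = 1 \<and>
        (\<exists>j<p. Fs ! p - {free_vertex Fs p} \<subseteq> Fs ! j))"

definition stacked :: "'a set set \<Rightarrow> nat \<Rightarrow> bool" where
  "stacked X d \<longleftrightarrow> pure X d \<and> (\<exists>Fs. stacking_order X Fs)"

definition walk :: "'a set set \<Rightarrow> nat \<Rightarrow> 'a set list \<Rightarrow> bool" where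
  "walk X d fs \<longleftrightarrow> fs \<noteq> [] \<and> set fs \<subseteq> facets X \<and>
     (\<forall>i. Suc i < length fs \<longrightarrow> card (fs ! i \<inter> fs ! Suc i) = d)"

definition path :: "'a set set \<Rightarrow> nat \<Rightarrow> 'a set list \<Rightarrow> bool" where
  "path X d fs \<longleftrightarrow> walk X d fs \<and>
     inj_on (\<lambda>i. fs ! i \<inter> fs ! Suc i) {i. Suc i < length fs}"

end

theory Submission
  imports Defs
begin

theorem lemma2p5:
  fixes V :: "'a set" and X :: "'a set set" and d :: nat
    and Fs fs :: "'a set list" and q :: nat
  assumes "simplicial_complex V X"
    and "stacked X d"
    and "stacking_order X Fs"
    and "path X d fs"
    and "length fs \<ge> 2"
    and "q < length Fs" and "Fs ! q \<in> set fs"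
    and "\<forall>j<length Fs. Fs ! j \<in> set fs \<longrightarrow> j \<le> q"
  shows "(Fs ! q = fs ! 0 \<and> {free_vertex Fs q} = fs ! 0 - fs ! 1) \<or>
         (Fs ! q = fs ! (length fs - 1) \<and>
          {free_vertex Fs q} = fs ! (length fs - 1) - fs ! (length fs - 2))"
proof -
  define f where "f = Fs ! q"
  define p where "p = length fs"
  have pure: "pure X d" using assms(2) stacked_def by blast
  have so: "distinct Fs" "set Fs = facets X" using assms(3) stacking_order_def by auto
  have wk: "set fs \<subseteq> facets X" "\<And>i. Suc i < p \<Longrightarrow> card (fs ! i \<inter> fs ! Suc i) = d"
    using assms(4) unfolding path_def walk_def p_def by auto
  have inj: "inj_on (\<lambda>i. fs ! i \<inter> fs ! Suc i) {i. Suc i < p}"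
    using assms(4) unfolding path_def p_def by auto
  have cardF: "\<And>g. g \<in> set fs \<Longrightarrow> card g = d + 1"
    using wk(1) pure unfolding pure_def by auto
  have finF: "\<And>g. g \<in> set fs \<Longrightarrow> finite g"
    using cardF card.infinite by fastforce
  have nth_in: "\<And>i. i < p \<Longrightarrow> fs ! i \<in> set fs" using p_def by auto
  have neq: "\<And>i. Suc i < p \<Longrightarrow> fs ! i \<noteq> fs ! Suc i"
  proof
    fix i assume a: "Suc i < p" "fs ! i = fs ! Suc i"
    hence "card (fs ! i \<inter> fs ! Suc i) = d + 1" using cardF nth_in by simp
    thus False using wk(2)[OF a(1)] by simp
  qed
  have fin: "f \<in> set fs" using assms(7) f_def by simp
  have q0: "q \<noteq> 0"
  proof
    assume "q = 0"
    have all: "\<And>g. g \<in> set fs \<Longrightarrow> g = f"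
    proof -
      fix g assume "g \<in> set fs"
      hence "g \<in> set Fs" using wk(1) so by auto
      then obtain j where "j < length Fs" "Fs ! j = g" by (auto simp: in_set_conv_nth)
      thus "g = f" using assms(8) \<open>g \<in> set fs\<close> \<open>q = 0\<close> f_def by auto
    qed
    have "Suc 0 < p" using assms(5) p_def by simp
    hence "fs ! 0 = f" "fs ! Suc 0 = f" using all nth_in by auto
    hence "fs ! 0 = fs ! Suc 0" by simp
    thus False using neq[of 0] assms(5) p_def by auto
  qed
  have c1: "card (new_vertices Fs q) = 1" using assms(3,6) q0 unfolding stacking_order_def by auto
  then obtain v where nv: "new_vertices Fs q = {v}" using card_1_singletonE by blast
  have fv: "free_vertex Fs q = v" unfolding free_vertex_def nv by simp
  have vf: "v \<in> f" using nv f_def unfolding new_vertices_def by auto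
  have notv: "\<And>g. g \<in> set fs \<Longrightarrow> g \<noteq> f \<Longrightarrow> v \<notin> g"
  proof -
    fix g assume g: "g \<in> set fs" "g \<noteq> f"
    hence "g \<in> set Fs" using wk(1) so by auto
    then obtain j where j: "j < length Fs" "Fs ! j = g" by (auto simp: in_set_conv_nth)
    hence "j \<le> q" using assms(8) g by auto
    hence "j < q" using g j f_def by (metis le_neq_implies_less)
    hence "g \<in> set (take q Fs)" using j by (metis assms(6) in_set_conv_nth length_take min.absorb4 nth_take)
    thus "v \<notin> g" using nv unfolding new_vertices_def by auto
  qed
  have key: "\<And>g. g \<in> set fs \<Longrightarrow> g \<noteq> f \<Longrightarrow> card (f \<inter> g) = d \<Longrightarrow> f \<inter> g = f - {v}"
  proof -
    fix g assume g: "g \<in> set fs" "g \<noteq> f" "card (f \<inter> g) = d"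
    have sub: "f \<inter> g \<subseteq> f - {v}" using notv[OF g(1,2)] by auto
    have "card (f - {v}) = d" using cardF[OF fin] vf finF[OF fin] by simp
    thus "f \<inter> g = f - {v}" using sub g(3) finF[OF fin]
      by (metis card_subset_eq finite_Diff)
  qed
  have ends: "\<And>i. i < p \<Longrightarrow> fs ! i = f \<Longrightarrow> i = 0 \<or> i = p - 1"
  proof (rule ccontr)
    fix i assume i: "i < p" "fs ! i = f" "\<not> (i = 0 \<or> i = p - 1)"
    then obtain k where k: "i = Suc k" by (cases i) auto
    have s: "Suc i < p" using i by auto
    have a: "fs ! k \<inter> fs ! Suc k = f - {v}"
    proof -
      have "fs ! k \<noteq> f" using neq[of k] i k s by auto
      moreover have "card (f \<inter> fs ! k) = d" using wk(2)[of k] i k s by (simp add: Int_commute)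
      ultimately show ?thesis using key[of "fs ! k"] nth_in[of k] i k s by (auto simp: Int_commute)
    qed
    have b: "fs ! i \<inter> fs ! Suc i = f - {v}"
    proof -
      have "fs ! Suc i \<noteq> f" using neq[of i] i s by auto
      moreover have "card (f \<inter> fs ! Suc i) = d" using wk(2)[OF s] i by simp
      ultimately show ?thesis using key[of "fs ! Suc i"] nth_in[OF s] i by auto
    qed
    have "k = i" using inj a b k s unfolding inj_on_def by auto
    thus False using k by simp
  qed
  obtain i where i: "i < p" "fs ! i = f" using fin p_def by (auto simp: in_set_conv_nth)
  show ?thesis
  proof (cases "i = 0")
    case True
    have s: "Suc 0 < p" using assms(5) p_def by simp
    have "fs ! 1 \<noteq> f" using neq[OF s] i True by auto
    hence "f \<inter> fs ! 1 = f - {v}" using key[of "fs ! 1"] nth_in[of 1] s wk(2)[OF s] i True by auto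
    hence "fs ! 0 - fs ! 1 = {v}" using i True vf by auto
    thus ?thesis using True i fv f_def by auto
  next
    case False
    hence ip: "i = p - 1" using ends i by blast
    define k where "k = p - 2"
    have s: "Suc k < p" "Suc k = p - 1" using assms(5) p_def k_def by auto
    have "fs ! k \<noteq> f" using neq[OF s(1)] i ip s by auto
    moreover have "card (f \<inter> fs ! k) = d" using wk(2)[OF s(1)] i ip s by (simp add: Int_commute)
    ultimately have "f \<inter> fs ! k = f - {v}" using key[of "fs ! k"] nth_in[of k] s by auto
    hence "fs ! (p - 1) - fs ! (p - 2) = {v}" using i ip vf k_def by auto
    thus ?thesis using i ip fv f_def p_def by auto
  qed
qed

end
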